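(* Let $\ell>0$, $g>0$, $T>0$, and let $f\colon\mathbb R\to\mathbb R$ be a $T$-periodic function of class $C^2$. Then the linear Whitney inverted pendulum problem has a $T$-periodic solution, i.e. there exists a $T$-periodic $C^2$ function $x\colon\mathbb R\to(-\ell,\ell)$ satisfying \[ \ddot x=\left(\frac{g}{\ell^2}\sqrt{\ell^2-x^2}-\frac{\dot x^2}{\ell^2-x^2}\right)x-\frac{\ell^2-x^2}{\ell^2}\,\ddot f(t)\quad\text{for all }t\in\mathbb R. \]
   Context: The linear Whitney inverted pendulum problem: a rod of length $\ell$, with its whole mass concentrated at its top, is pivoted (frictionlessly) on the floor of a car moving along a straight line, the pivot being at position $f(t)$ at time $t$; the rod moves in the vertical plane containing the line under gravity (gravitational constant $g$) and the motion of the car. Writing $x(t)$ for the horizontal displacement of the top of the rod relative to the pivot (so the height of the top is $\sqrt{\ell^2-x(t)^2}$), Newton's law gives the displayed differential equation. A solution for which the rod never touches the floor is one with $|x(t)|<\ell$ for all $t$; a $T$-periodic solution of the problem is such a solution which is $T$-periodic. *)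

theory Defs
  imports "HOL-Analysis.Analysis"
begin

definition C2_with :: "(real \<Rightarrow> real) \<Rightarrow> (real \<Rightarrow> real) \<Rightarrow> (real \<Rightarrow> real) \<Rightarrow> bool" where
  "C2_with u u' u'' \<longleftrightarrow>
     (\<forall>t. (u has_real_derivative u' t) (at t)) \<and>
     (\<forall>t. (u' has_real_derivative u'' t) (at t)) \<and>
     continuous_on UNIV u''"

definition periodic_with :: "real \<Rightarrow> (real \<Rightarrow> real) \<Rightarrow> bool" where
  "periodic_with T u \<longleftrightarrow> (\<forall>t. u (t + T) = u t)"

end

theory Submission
  imports Defs "HOL-Analysis.Analysis"
begin

lemma antideriv:
  fixes f :: "real \<Rightarrow> real"
  assumes cf: "continuous_on UNIV f"
  shows "\<exists>F. \<forall>x. (F has_real_derivative f x) (at x)"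
proof -
  define F where "F y = integral {0..y} f - integral {y..0} f" for y
  have int: "f integrable_on {a..b}" for a b
    by (rule integrable_continuous_interval) (rule continuous_on_subset[OF cf], simp)
  have eq: "F y = integral {a..y} f - integral {a..0} f" if "a \<le> y" "a \<le> 0" for a y
  proof (cases "0 \<le> y")
    case True
    have "integral {a..0} f + integral {0..y} f = integral {a..y} f"
      using Henstock_Kurzweil_Integration.integral_combine[where a=a and c=0 and b=y and f=f] that True int by auto
    moreover have "integral {y..0} f = 0"
      using True by (cases "y = 0") auto
    ultimately show ?thesis unfolding F_def by simp
  next
    case False
    have "integral {a..y} f + integral {y..0} f = integral {a..0} f"
      using Henstock_Kurzweil_Integration.integral_combine[where a=a and c=y and b=0 and f=f] that False int by auto
    moreover have "integral {0..y} f = 0"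
      using False by auto
    ultimately show ?thesis unfolding F_def by simp
  qed
  have "(F has_real_derivative f x) (at x)" for x
  proof -
    define a where "a = - \<bar>x\<bar> - 1"
    have "((\<lambda>y. integral {a..y} f) has_real_derivative f x) (at x within {a..x+1})"
      by (rule integral_has_real_derivative) (use cf in \<open>auto simp: a_def intro: continuous_on_subset\<close>)
    moreover have "at x within {a..x+1} = at x"
      by (rule at_within_interior) (auto simp: a_def)
    ultimately have "((\<lambda>y. integral {a..y} f - integral {a..0} f) has_real_derivative f x) (at x)"
      by (auto intro!: derivative_eq_intros)
    then show ?thesis
      by (rule has_field_derivative_transform_within_open[where S="{a<..}"])
         (auto simp: a_def intro!: eq[symmetric])
  qed
  then show ?thesis by blast
qed


definition Phi :: "real \<Rightarrow> (real \<Rightarrow> real) \<Rightarrow> real \<Rightarrow> real" where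
  "Phi m w = (SOME F. \<forall>x. (F has_real_derivative exp (m * x) * w x) (at x))"

definition Aop :: "real \<Rightarrow> real \<Rightarrow> (real \<Rightarrow> real) \<Rightarrow> real \<Rightarrow> real" where
  "Aop m T w t = exp (- m * t) * (Phi m w t - Phi m w (t - T)) / (1 - exp (- m * T))"

definition Bop :: "real \<Rightarrow> real \<Rightarrow> (real \<Rightarrow> real) \<Rightarrow> real \<Rightarrow> real" where
  "Bop m T w t = exp (m * t) * (Phi (- m) w (t + T) - Phi (- m) w t) / (1 - exp (- m * T))"

lemma Phi_deriv:
  assumes "continuous_on UNIV w"
  shows "(Phi m w has_real_derivative exp (m * x) * w x) (at x)"
proof -
  have "continuous_on UNIV (\<lambda>x. exp (m * x) * w x)"
    by (intro continuous_intros assms)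
  from antideriv[OF this] have "\<exists>F. \<forall>x. (F has_real_derivative exp (m * x) * w x) (at x)" .
  from someI_ex[OF this] show ?thesis unfolding Phi_def by blast
qed

lemma antideriv_integral:
  fixes F \<phi> :: "real \<Rightarrow> real"
  assumes "\<And>x. (F has_real_derivative \<phi> x) (at x)" "a \<le> b"
  shows "F b - F a = integral {a..b} \<phi>"
proof -
  have "(\<phi> has_integral (F b - F a)) {a..b}"
    by (rule fundamental_theorem_of_calculus[OF \<open>a \<le> b\<close>])
       (auto simp: has_real_derivative_iff_has_vector_derivative[symmetric]
             intro: has_field_derivative_at_within assms)
  then show ?thesis by (simp add: integral_unique)
qed

lemma Phi_diff:
  assumes "continuous_on UNIV w" "a \<le> b"
  shows "Phi m w b - Phi m w a = integral {a..b} (\<lambda>s. exp (m * s) * w s)"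
  by (rule antideriv_integral[OF Phi_deriv[OF assms(1)] assms(2)])

lemma Phi_periodic:
  assumes "continuous_on UNIV w" "\<And>t. w (t + T) = w t"
  shows "Phi m w (t + T) - Phi m w t = exp (m * T) * (Phi m w t - Phi m w (t - T))"
proof -
  define H where "H x = Phi m w (x + T) - Phi m w T - exp (m * T) * (Phi m w x - Phi m w 0)" for x
  have "(H has_real_derivative 0) (at x)" for x
  proof -
    have "(H has_real_derivative (exp (m * (x + T)) * w (x + T) * 1 - exp (m * T) * (exp (m * x) * w x))) (at x)"
      unfolding H_def
      by (rule derivative_eq_intros refl DERIV_chain2[OF Phi_deriv[OF assms(1)]] Phi_deriv[OF assms(1)] | simp)+
    moreover have "exp (m * (x + T)) * w (x + T) * 1 - exp (m * T) * (exp (m * x) * w x) = 0"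
      using assms(2) by (simp add: distrib_left exp_add)
    ultimately show ?thesis by simp
  qed
  then have H0: "H x = 0" for x
    using DERIV_isconst_all[of H x 0] by (simp add: H_def)
  show ?thesis using H0[of t] H0[of "t - T"] unfolding H_def by (simp add: algebra_simps)
qed

lemma exp_mul_lemmas:
  fixes m t T :: real
  shows "exp (- m * t) * exp (m * t) = 1" "exp (- m * t) * exp (m * (t - T)) = exp (- m * T)"
        "exp (m * t) * exp (- m * t) = 1" "exp (m * t) * exp (- m * (t + T)) = exp (- m * T)"
        "exp (- m * (t + T)) = exp (- m * t) * exp (- m * T)" "exp (m * (t + T)) = exp (m * t) * exp (m * T)"
        "exp (- m * T) * exp (m * T) = 1"
  by (simp_all add: exp_add[symmetric] algebra_simps exp_minus_inverse)

lemma c_pos: "(m::real) > 0 \<Longrightarrow> T > 0 \<Longrightarrow> 0 < 1 - exp (- m * T)"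
  using exp_less_cancel_iff[of "-(m*T)" 0] by simp

lemma Phi_deriv_chain:
  assumes "continuous_on UNIV w" "(g has_real_derivative g') (at x within S)"
  shows "((\<lambda>x. Phi m w (g x)) has_real_derivative exp (m * g x) * w (g x) * g') (at x within S)"
  using DERIV_chain2[OF Phi_deriv[OF assms(1)] assms(2)] by simp

lemma Aop_deriv:
  assumes "continuous_on UNIV w" "\<And>t. w (t + T) = w t" "m > 0" "T > 0"
  shows "(Aop m T w has_real_derivative (- m * Aop m T w t + w t)) (at t)"
proof -
  define c where "c = 1 - exp (- m * T)"
  have c: "c > 0" using c_pos assms by (simp add: c_def)
  have wT: "w (t - T) = w t" using assms(2)[of "t - T"] by simp
  have e: "exp (- m * t) * exp (m * (t - T)) = 1 - c" "exp (- m * t) * exp (m * t) = 1"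
    by (simp_all add: c_def mult_exp_exp algebra_simps)
  have ec: "exp (- (T * m)) = 1 - c" by (simp add: c_def algebra_simps)
  have eq: "Aop m T w = (\<lambda>t. exp (- m * t) * (Phi m w t - Phi m w (t - T)) * (1 / c))"
    by (simp add: Aop_def[abs_def] c_def)
  show ?thesis unfolding eq
    apply (rule derivative_eq_intros Phi_deriv_chain[OF assms(1)] refl)+
    using c by (simp add: Aop_def c_def[symmetric] field_simps wT mult_exp_exp algebra_simps ec)
qed

lemma Bop_deriv:
  assumes "continuous_on UNIV w" "\<And>t. w (t + T) = w t" "m > 0" "T > 0"
  shows "(Bop m T w has_real_derivative (m * Bop m T w t - w t)) (at t)"
proof -
  define c where "c = 1 - exp (- m * T)"
  have c: "c > 0" using c_pos assms by (simp add: c_def)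
  have ec2: "c * exp (T * m) = exp (T * m) - 1"
    by (simp add: c_def algebra_simps exp_minus field_simps)
  have wT': "w (T + t) = w t" using assms(2)[of t] by (simp add: add.commute)
  have ec: "exp (- (T * m)) = 1 - c" by (simp add: c_def algebra_simps)
  have eq: "Bop m T w = (\<lambda>t. exp (m * t) * (Phi (-m) w (t + T) - Phi (-m) w t) * (1 / c))"
    by (simp add: Bop_def[abs_def] c_def)
  show ?thesis unfolding eq
    apply (rule derivative_eq_intros Phi_deriv_chain[OF assms(1)] refl)+
    using c apply (simp add: Bop_def c_def[symmetric] field_simps wT' exp_diff exp_add exp_minus ec)
    using ec2 by algebra
qed

lemma Aop_periodic:
  assumes "continuous_on UNIV w" "\<And>t. w (t + T) = w t"
  shows "Aop m T w (t + T) = Aop m T w t"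
proof -
  have "Aop m T w (t + T) = exp (- m * (t + T)) * (exp (m * T) * (Phi m w t - Phi m w (t - T))) / (1 - exp (- m * T))"
    unfolding Aop_def using Phi_periodic[OF assms, of m t] by simp
  also have "\<dots> = Aop m T w t"
    unfolding Aop_def by (simp add: mult_exp_exp algebra_simps)
  finally show ?thesis .
qed

lemma Bop_periodic:
  assumes "continuous_on UNIV w" "\<And>t. w (t + T) = w t"
  shows "Bop m T w (t + T) = Bop m T w t"
proof -
  have P: "Phi (-m) w (t + T + T) - Phi (-m) w (t + T) = exp (- m * T) * (Phi (-m) w (t + T) - Phi (-m) w t)"
    using Phi_periodic[OF assms, of "-m" "t + T"] by simp
  have "Bop m T w (t + T) = exp (m * (t + T)) * (Phi (-m) w (t + T + T) - Phi (-m) w (t + T)) / (1 - exp (- m * T))"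
    by (simp add: Bop_def)
  also have "\<dots> = exp (m * (t + T)) * (exp (- m * T) * (Phi (-m) w (t + T) - Phi (-m) w t)) / (1 - exp (- m * T))"
    by (simp only: P)
  also have "\<dots> = Bop m T w t"
    unfolding Bop_def by (simp add: mult_exp_exp algebra_simps)
  finally show ?thesis .
qed

lemma Aop_integral:
  assumes "continuous_on UNIV w" "T > 0"
  shows "Aop m T w t = exp (- m * t) * integral {t - T..t} (\<lambda>s. exp (m * s) * w s) / (1 - exp (- m * T))"
  unfolding Aop_def using Phi_diff[OF assms(1), of "t - T" t m] assms(2) by simp

lemma Bop_integral:
  assumes "continuous_on UNIV w" "T > 0"
  shows "Bop m T w t = exp (m * t) * integral {t..t + T} (\<lambda>s. exp (- m * s) * w s) / (1 - exp (- m * T))"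
  unfolding Bop_def using Phi_diff[OF assms(1), of t "t + T" "-m"] assms(2) by simp

lemma cont_integrable: "continuous_on UNIV (w::real\<Rightarrow>real) \<Longrightarrow> (\<lambda>s. exp (k * s) * w s) integrable_on {a..b}"
  by (rule integrable_continuous_interval) (auto intro!: continuous_intros intro: continuous_on_subset)

lemma Aop_mono:
  assumes "continuous_on UNIV w1" "continuous_on UNIV w2" "\<And>s. w1 s \<le> w2 s" "m > 0" "T > 0"
  shows "Aop m T w1 t \<le> Aop m T w2 t"
proof -
  have "integral {t - T..t} (\<lambda>s. exp (m * s) * w1 s) \<le> integral {t - T..t} (\<lambda>s. exp (m * s) * w2 s)"
    by (rule integral_le[OF cont_integrable[OF assms(1)] cont_integrable[OF assms(2)]])
       (simp add: assms(3))
  then show ?thesis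
    unfolding Aop_integral[OF assms(1,5)] Aop_integral[OF assms(2,5)]
    using c_pos[OF assms(4,5)]
    by (intro divide_right_mono mult_left_mono) auto
qed

lemma Bop_mono:
  assumes "continuous_on UNIV w1" "continuous_on UNIV w2" "\<And>s. w1 s \<le> w2 s" "m > 0" "T > 0"
  shows "Bop m T w1 t \<le> Bop m T w2 t"
proof -
  have "integral {t..t + T} (\<lambda>s. exp (- m * s) * w1 s) \<le> integral {t..t + T} (\<lambda>s. exp (- m * s) * w2 s)"
    by (rule integral_le[OF cont_integrable[OF assms(1)] cont_integrable[OF assms(2)]])
       (simp add: assms(3))
  then show ?thesis
    unfolding Bop_integral[OF assms(1,5)] Bop_integral[OF assms(2,5)]
    using c_pos[OF assms(4,5)]
    by (intro divide_right_mono mult_left_mono) auto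
qed

lemma Aop_const:
  assumes "m > 0" "T > 0"
  shows "Aop m T (\<lambda>_. k) t = k / m"
proof -
  have "(\<lambda>s. k * exp (m * s) / m) t - (\<lambda>s. k * exp (m * s) / m) (t - T) = integral {t - T..t} (\<lambda>s. exp (m * s) * k)"
    by (rule antideriv_integral) (use assms in \<open>auto intro!: derivative_eq_intros\<close>)
  then show ?thesis
    unfolding Aop_integral[OF continuous_on_const assms(2)] using c_pos[OF assms]  assms
    by (simp add: field_simps exp_diff exp_add exp_minus)
qed

lemma Bop_const:
  assumes "m > 0" "T > 0"
  shows "Bop m T (\<lambda>_. k) t = k / m"
proof -
  have "(\<lambda>s. - k * exp (- m * s) / m) (t + T) - (\<lambda>s. - k * exp (- m * s) / m) t = integral {t..t + T} (\<lambda>s. exp (- m * s) * k)"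
    by (rule antideriv_integral) (use assms in \<open>auto intro!: derivative_eq_intros\<close>)
  then show ?thesis
    unfolding Bop_integral[OF continuous_on_const assms(2)] using c_pos[OF assms]  assms
    by (simp add: field_simps exp_diff exp_add exp_minus)
qed



lemma periodic_deriv:
  fixes u u' :: "real \<Rightarrow> real"
  assumes "\<And>t. (u has_real_derivative u' t) (at t)" "\<And>t. u (t + T) = u t"
  shows "u' (t + T) = u' t"
proof -
  have "((\<lambda>s. u (s + T)) has_real_derivative u' (t + T) * 1) (at t)"
    by (rule DERIV_chain2[OF assms(1)]) (auto intro!: derivative_eq_intros)
  moreover have "(\<lambda>s. u (s + T)) = u" using assms(2) by auto
  ultimately show ?thesis using DERIV_unique[OF _ assms(1)[of t]] by auto
qed

lemma periodic_nat:
  fixes u :: "real \<Rightarrow> real"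
  assumes "\<And>t. u (t + T) = u t"
  shows "u (s + real n * T) = u s"
proof (induction n)
  case (Suc n)
  have "u (s + real (Suc n) * T) = u ((s + real n * T) + T)" by (simp add: algebra_simps)
  then show ?case using assms[of "s + real n * T"] Suc by simp
qed simp

lemma periodic_int:
  fixes u :: "real \<Rightarrow> real"
  assumes "\<And>t. u (t + T) = u t"
  shows "u (s + real_of_int k * T) = u s"
proof (cases "k \<ge> 0")
  case True
  have "u (s + real (nat k) * T) = u s" by (rule periodic_nat[where u=u and T=T, OF assms])
  moreover have "real (nat k) = real_of_int k" using True by simp
  ultimately show ?thesis by simp
next
  case False
  have "u ((s - real (nat (-k)) * T) + real (nat (-k)) * T) = u (s - real (nat (-k)) * T)"
    by (rule periodic_nat[where u=u and T=T, OF assms])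
  moreover have "real (nat (-k)) = - real_of_int k" using False by simp
  ultimately show ?thesis by simp
qed

lemma periodic_bounded:
  fixes u :: "real \<Rightarrow> real"
  assumes "continuous_on UNIV u" "\<And>t. u (t + T) = u t" "T > 0"
  shows "\<exists>B. \<forall>t. \<bar>u t\<bar> \<le> B"
proof -
  have "bounded (u ` {0..T})"
    by (rule compact_imp_bounded[OF compact_continuous_image[OF continuous_on_subset[OF assms(1)]]]) auto
  then obtain B where B0: "\<forall>x\<in>u ` {0..T}. \<bar>x\<bar> \<le> B"
    unfolding bounded_iff real_norm_def by blast
  have B: "\<bar>u s\<bar> \<le> B" if "s \<in> {0..T}" for s using B0 that by blast
  have "\<bar>u t\<bar> \<le> B" for t
  proof -
    define k where "k = \<lfloor>t / T\<rfloor>"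
    define s where "s = t - real_of_int k * T"
    have "real_of_int k \<le> t / T" "t / T < real_of_int k + 1" unfolding k_def by linarith+
    then have "real_of_int k * T \<le> t" "t < (real_of_int k + 1) * T"
      using assms(3) by (simp_all add: field_simps)
    then have "s \<in> {0..T}" unfolding s_def by (auto simp: algebra_simps)
    moreover have "u t = u s" using periodic_int[where u=u and T=T, OF assms(2), of s k] by (simp add: s_def)
    ultimately show ?thesis using B by simp
  qed
  then show ?thesis by blast
qed

lemma sin_lip: "\<bar>sin x - sin y\<bar> \<le> \<bar>x - y\<bar>" for x y :: real
proof -
  have "\<bar>sin x - sin y\<bar> = 2 * \<bar>sin ((x - y) / 2)\<bar> * \<bar>cos ((x + y) / 2)\<bar>"
    by (simp add: sin_diff_sin abs_mult)
  also have "\<dots> \<le> 2 * \<bar>(x - y) / 2\<bar> * 1"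
    by (intro mult_mono abs_sin_x_le_abs_x) auto
  finally show ?thesis by simp
qed

lemma cos_lip: "\<bar>cos x - cos y\<bar> \<le> \<bar>x - y\<bar>" for x y :: real
proof -
  have "\<bar>cos x - cos y\<bar> = 2 * \<bar>sin ((x + y) / 2)\<bar> * \<bar>sin ((y - x) / 2)\<bar>"
    by (simp add: cos_diff_cos abs_mult)
  also have "\<dots> \<le> 2 * 1 * \<bar>(y - x) / 2\<bar>"
    by (intro mult_mono abs_sin_x_le_abs_x) auto
  finally show ?thesis by simp
qed

lemma lip_from_deriv:
  fixes u u' :: "real \<Rightarrow> real"
  assumes "\<And>x. (u has_real_derivative u' x) (at x)" "\<And>x. \<bar>u' x\<bar> \<le> K"
  shows "\<bar>u t - u s\<bar> \<le> K * \<bar>t - s\<bar>"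
proof -
  have *: "\<bar>u b - u a\<bar> \<le> K * \<bar>b - a\<bar>" if "a < b" for a b
  proof -
    have "\<exists>z. a < z \<and> z < b \<and> u b - u a = (b - a) * u' z"
      by (rule MVT2[OF that]) (rule assms(1))
    then obtain z where "u b - u a = (b - a) * u' z" by blast
    then have "\<bar>u b - u a\<bar> = \<bar>b - a\<bar> * \<bar>u' z\<bar>" by (simp add: abs_mult)
    also have "\<dots> \<le> \<bar>b - a\<bar> * K" by (intro mult_left_mono assms(2)) auto
    finally show ?thesis by (simp add: mult.commute)
  qed
  consider "s < t" | "t < s" | "s = t" by linarith
  then show ?thesis
  proof cases
    case 1 then show ?thesis using *[of s t] by simp
  next
    case 2 then show ?thesis using *[of t s] by (simp add: abs_minus_commute)
  next
    case 3 then show ?thesis by simp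
  qed
qed



theorem theorem1p1:
  fixes l g T :: real and f f' f'' :: "real \<Rightarrow> real"
  assumes "l > 0" and "g > 0" and "T > 0"
    and "C2_with f f' f''" and "periodic_with T f"
  shows "\<exists>x x' x''. C2_with x x' x'' \<and> periodic_with T x \<and>
           (\<forall>t. \<bar>x t\<bar> < l) \<and>
           (\<forall>t. x'' t = (g / l\<^sup>2 * sqrt (l\<^sup>2 - (x t)\<^sup>2) - (x' t)\<^sup>2 / (l\<^sup>2 - (x t)\<^sup>2)) * x t
                      - (l\<^sup>2 - (x t)\<^sup>2) / l\<^sup>2 * f'' t)"
proof -
  have lpos: "l > 0" and Tpos: "T > 0" using assms by auto
  from assms(4) have df: "\<And>t. (f has_real_derivative f' t) (at t)"
    and df': "\<And>t. (f' has_real_derivative f'' t) (at t)" and cf'': "continuous_on UNIV f''"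
    unfolding C2_with_def by auto
  have pf: "\<And>t. f (t + T) = f t" using assms(5) unfolding periodic_with_def by auto
  have pf': "\<And>t. f' (t + T) = f' t" by (rule periodic_deriv[OF df pf])
  have pf'': "\<And>t. f'' (t + T) = f'' t" by (rule periodic_deriv[OF df' pf'])
  obtain F0 where F0: "\<And>t. \<bar>f'' t\<bar> \<le> F0" using periodic_bounded[OF cf'' pf'' Tpos] by blast
  define F where "F = max F0 0"
  have Fb: "\<bar>f'' t\<bar> \<le> F" for t using F0[of t] by (auto simp: F_def)
  have F0le: "F \<ge> 0" by (simp add: F_def)
  define a where "a = g / l"
  have apos: "a > 0" using assms by (simp add: a_def)
  have Fl: "F / l \<ge> 0" using F0le lpos by simp
  define m where "m = a + F / l + 1"
  have m1: "m \<ge> 1" using apos Fl by (simp add: m_def)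
  have mpos: "m > 0" using m1 by simp
  define M where "M = m * m"
  have mM: "a + F / l \<le> M"
  proof -
    have "m \<le> m * m" using m1 by (simp add: mult_le_cancel_left1)
    then show ?thesis by (simp add: M_def m_def)
  qed
  have Mpos: "M > 0" using mpos by (simp add: M_def)
  have aM: "a \<le> M" using mM Fl by simp
  define h where "h t \<theta> = a * sin \<theta> - f'' t / l * cos \<theta>" for t \<theta>
  have hlip: "h t y - h t x \<le> M * (y - x)" if "x \<le> y" for t x y
  proof -
    have "h t y - h t x = a * (sin y - sin x) - f'' t / l * (cos y - cos x)"
      by (simp add: h_def algebra_simps)
    also have "\<dots> \<le> a * \<bar>sin y - sin x\<bar> + \<bar>f'' t / l\<bar> * \<bar>cos y - cos x\<bar>"
    proof -
      have "a * (sin y - sin x) \<le> a * \<bar>sin y - sin x\<bar>" using apos by (intro mult_left_mono) auto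
      moreover have "- (f'' t / l * (cos y - cos x)) \<le> \<bar>f'' t / l\<bar> * \<bar>cos y - cos x\<bar>"
        by (metis abs_ge_minus_self abs_mult)
      ultimately show ?thesis by linarith
    qed
    also have "\<dots> \<le> a * (y - x) + (F / l) * (y - x)"
    proof -
      have "a * \<bar>sin y - sin x\<bar> \<le> a * (y - x)"
        using sin_lip[of y x] that apos by (intro mult_left_mono) auto
      moreover have "\<bar>f'' t / l\<bar> * \<bar>cos y - cos x\<bar> \<le> (F / l) * (y - x)"
      proof (rule mult_mono)
        show "\<bar>f'' t / l\<bar> \<le> F / l" using Fb[of t] lpos by (simp add: divide_right_mono)
        show "\<bar>cos y - cos x\<bar> \<le> y - x" using cos_lip[of y x] that by simp
      qed (use Fl in auto)
      ultimately show ?thesis by linarith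
    qed
    also have "\<dots> = (a + F / l) * (y - x)" by (simp add: algebra_simps)
    also have "\<dots> \<le> M * (y - x)" using mM that by (intro mult_right_mono) auto
    finally show ?thesis .
  qed
  have hmono: "M * x - h t x \<le> M * y - h t y" if "x \<le> y" for t x y
    using hlip[OF that, of t] by (simp add: algebra_simps)
  have hm: "h t (- (pi/2)) = - a" "h t (pi/2) = a" for t by (simp_all add: h_def)
  define wf where "wf \<theta> = (\<lambda>s. M * \<theta> s - h s (\<theta> s))" for \<theta> :: "real \<Rightarrow> real"
  define Op where "Op \<theta> = (\<lambda>t. (Aop m T (wf \<theta>) t + Bop m T (wf \<theta>) t) / (2 * m))" for \<theta>
  define Op' where "Op' \<theta> = (\<lambda>t. (Bop m T (wf \<theta>) t - Aop m T (wf \<theta>) t) / 2)" for \<theta>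
  define Good where "Good \<theta> \<longleftrightarrow> continuous_on UNIV \<theta> \<and> (\<forall>t. \<theta> (t + T) = \<theta> t) \<and>
      (\<forall>t. - (pi/2) \<le> \<theta> t \<and> \<theta> t \<le> pi/2)" for \<theta>
  define c1 where "c1 = - M * (pi/2) + a"
  define c2 where "c2 = M * (pi/2) - a"
  have wf_cont: "continuous_on UNIV (wf \<theta>)" if "continuous_on UNIV \<theta>" for \<theta>
    unfolding wf_def h_def using lpos by (intro continuous_intros that cf'') auto
  have wf_per: "wf \<theta> (t + T) = wf \<theta> t" if "\<And>t. \<theta> (t + T) = \<theta> t" for \<theta> t
    unfolding wf_def h_def using that pf'' by simp
  have wf_bounds: "c1 \<le> wf \<theta> t \<and> wf \<theta> t \<le> c2" if "Good \<theta>" for \<theta> t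
  proof -
    from that have b: "- (pi/2) \<le> \<theta> t" "\<theta> t \<le> pi/2" by (auto simp: Good_def)
    from hmono[OF b(1), of t] hmono[OF b(2), of t] show ?thesis
      by (simp add: wf_def c1_def c2_def hm)
  qed
  have wf_mono: "wf \<theta>1 t \<le> wf \<theta>2 t" if "\<theta>1 t \<le> \<theta>2 t" for \<theta>1 \<theta>2 t
    unfolding wf_def using hmono[OF that] .
  have Op_deriv: "(Op \<theta> has_real_derivative Op' \<theta> t) (at t)" if "Good \<theta>" for \<theta> t
  proof -
    have c: "continuous_on UNIV (wf \<theta>)" using wf_cont that by (auto simp: Good_def)
    have p: "\<And>t. wf \<theta> (t + T) = wf \<theta> t" using wf_per that by (auto simp: Good_def)
    have "(Op \<theta> has_real_derivative ((- m * Aop m T (wf \<theta>) t + wf \<theta> t) + (m * Bop m T (wf \<theta>) t - wf \<theta> t)) / (2 * m)) (at t)"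
      unfolding Op_def by (intro DERIV_cdivide DERIV_add Aop_deriv[OF c p mpos Tpos] Bop_deriv[OF c p mpos Tpos])
    moreover have "((- m * Aop m T (wf \<theta>) t + wf \<theta> t) + (m * Bop m T (wf \<theta>) t - wf \<theta> t)) / (2 * m) = Op' \<theta> t"
      using mpos by (simp add: Op'_def field_simps)
    ultimately show ?thesis by (simp only:)
  qed
  have Op'_deriv: "(Op' \<theta> has_real_derivative M * Op \<theta> t - wf \<theta> t) (at t)" if "Good \<theta>" for \<theta> t
  proof -
    have c: "continuous_on UNIV (wf \<theta>)" using wf_cont that by (auto simp: Good_def)
    have p: "\<And>t. wf \<theta> (t + T) = wf \<theta> t" using wf_per that by (auto simp: Good_def)
    have "(Op' \<theta> has_real_derivative ((m * Bop m T (wf \<theta>) t - wf \<theta> t) - (- m * Aop m T (wf \<theta>) t + wf \<theta> t)) / 2) (at t)"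
      unfolding Op'_def by (intro DERIV_cdivide DERIV_diff Aop_deriv[OF c p mpos Tpos] Bop_deriv[OF c p mpos Tpos])
    moreover have "((m * Bop m T (wf \<theta>) t - wf \<theta> t) - (- m * Aop m T (wf \<theta>) t + wf \<theta> t)) / 2 = M * Op \<theta> t - wf \<theta> t"
      using mpos by (simp add: Op_def M_def field_simps)
    ultimately show ?thesis by (simp only:)
  qed
  have AB_bounds: "c1 / m \<le> Aop m T (wf \<theta>) t \<and> Aop m T (wf \<theta>) t \<le> c2 / m \<and>
                   c1 / m \<le> Bop m T (wf \<theta>) t \<and> Bop m T (wf \<theta>) t \<le> c2 / m" if "Good \<theta>" for \<theta> t
  proof -
    have c: "continuous_on UNIV (wf \<theta>)" using wf_cont that by (auto simp: Good_def)
    have l1: "\<And>s. c1 \<le> wf \<theta> s" and l2: "\<And>s. wf \<theta> s \<le> c2" using wf_bounds[OF that] by auto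
    show ?thesis
      using Aop_mono[OF continuous_on_const c l1 mpos Tpos, of t] Aop_mono[OF c continuous_on_const l2 mpos Tpos, of t]
            Bop_mono[OF continuous_on_const c l1 mpos Tpos, of t] Bop_mono[OF c continuous_on_const l2 mpos Tpos, of t]
      by (simp add: Aop_const[OF mpos Tpos] Bop_const[OF mpos Tpos])
  qed
  have Op_bounds: "c1 / M \<le> Op \<theta> t \<and> Op \<theta> t \<le> c2 / M" if "Good \<theta>" for \<theta> t
  proof -
    from AB_bounds[OF that, of t] have
      "2 * c1 / m \<le> Aop m T (wf \<theta>) t + Bop m T (wf \<theta>) t"
      "Aop m T (wf \<theta>) t + Bop m T (wf \<theta>) t \<le> 2 * c2 / m" by auto
    then have "(2 * c1 / m) / (2 * m) \<le> Op \<theta> t" "Op \<theta> t \<le> (2 * c2 / m) / (2 * m)"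
      unfolding Op_def using mpos by (auto intro!: divide_right_mono simp del: times_divide_eq_left divide_divide_eq_left)
    moreover have "(2 * c1 / m) / (2 * m) = c1 / M" "(2 * c2 / m) / (2 * m) = c2 / M"
      using mpos by (simp_all add: M_def field_simps)
    ultimately show ?thesis by (simp add: M_def)
  qed
  define K where "K = (c2 - c1) / (2 * m)"
  have Op'_bound: "\<bar>Op' \<theta> t\<bar> \<le> K" if "Good \<theta>" for \<theta> t
  proof -
    from AB_bounds[OF that, of t] have "\<bar>Bop m T (wf \<theta>) t - Aop m T (wf \<theta>) t\<bar> \<le> c2 / m - c1 / m" by auto
    then show ?thesis unfolding Op'_def K_def using mpos by (simp add: field_simps)
  qed
  have c1M: "c1 / M = - (pi/2) + a / M" using Mpos by (simp add: c1_def field_simps)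
  have c2M: "c2 / M = pi/2 - a / M" using Mpos by (simp add: c2_def field_simps)
  have aM1: "a / M \<le> 1" using aM Mpos by simp
  have aMpos: "a / M > 0" using apos Mpos by simp
  have pi2: "pi / 2 > 1" using pi_gt3 by simp
  have c21: "c1 \<le> c2"
  proof -
    have "c2 - c1 = M * pi - 2 * a" by (simp add: c1_def c2_def algebra_simps)
    moreover have "M * 2 \<le> M * pi" using Mpos pi_gt3 by (intro mult_left_mono) auto
    ultimately show ?thesis using aM by linarith
  qed
  have Kpos: "K \<ge> 0" unfolding K_def using c21 mpos by simp
  have Op_good: "Good (Op \<theta>)" if "Good \<theta>" for \<theta>
  proof -
    have "continuous_on UNIV (Op \<theta>)"
      by (rule continuous_at_imp_continuous_on) (meson DERIV_continuous Op_deriv that)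
    moreover have "Op \<theta> (t + T) = Op \<theta> t" for t
    proof -
      have c: "continuous_on UNIV (wf \<theta>)" using wf_cont that by (auto simp: Good_def)
      have p: "\<And>t. wf \<theta> (t + T) = wf \<theta> t" using wf_per that by (auto simp: Good_def)
      show ?thesis unfolding Op_def using Aop_periodic[OF c p] Bop_periodic[OF c p] by simp
    qed
    moreover have "- (pi/2) \<le> Op \<theta> t \<and> Op \<theta> t \<le> pi/2" for t
      using Op_bounds[OF that, of t] c1M c2M aMpos by auto
    ultimately show ?thesis unfolding Good_def by blast
  qed
  have Op_mono: "Op \<theta>1 t \<le> Op \<theta>2 t" if "Good \<theta>1" "Good \<theta>2" "\<And>s. \<theta>1 s \<le> \<theta>2 s" for \<theta>1 \<theta>2 t
  proof -
    have c1': "continuous_on UNIV (wf \<theta>1)" using wf_cont that by (auto simp: Good_def)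
    have c2': "continuous_on UNIV (wf \<theta>2)" using wf_cont that by (auto simp: Good_def)
    have le: "\<And>s. wf \<theta>1 s \<le> wf \<theta>2 s" using wf_mono that(3) by blast
    show ?thesis unfolding Op_def using mpos
        Aop_mono[OF c1' c2' le mpos Tpos, of t] Bop_mono[OF c1' c2' le mpos Tpos, of t]
      by (intro divide_right_mono) auto
  qed
  define th where "th = rec_nat (\<lambda>_::real. - (pi/2)) (\<lambda>_ \<theta>. Op \<theta>)"
  have th0: "th 0 = (\<lambda>_. - (pi/2))" and thS: "\<And>n. th (Suc n) = Op (th n)"
    by (simp_all add: th_def)
  have good: "Good (th n)" for n
  proof (induction n)
    case 0 then show ?case by (simp add: th0 Good_def)
  next
    case (Suc n) then show ?case by (simp add: thS Op_good)
  qed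
  have incr: "th n t \<le> th (Suc n) t" for n t
  proof (induction n arbitrary: t)
    case 0
    show ?case using Op_bounds[OF good[of 0], of t] c1M aMpos by (simp add: th0 thS)
  next
    case (Suc n)
    have "Op (th n) t \<le> Op (th (Suc n)) t" by (rule Op_mono[OF good good Suc])
    then show ?case by (simp only: thS)
  qed
  have thb: "- (pi/2) \<le> th n t \<and> th n t \<le> pi/2" for n t
    using good[of n] by (auto simp: Good_def)
  have thb1: "c1 / M \<le> th (Suc n) t \<and> th (Suc n) t \<le> c2 / M" for n t
    using Op_bounds[OF good[of n], of t] by (simp add: thS)
  have lip: "\<bar>th n t - th n s\<bar> \<le> K * \<bar>t - s\<bar>" for n t s
  proof (cases n)
    case 0 then show ?thesis using Kpos by (simp add: th0)
  next
    case (Suc k)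
    show ?thesis unfolding Suc thS
      by (rule lip_from_deriv[OF Op_deriv[OF good] Op'_bound[OF good]])
  qed
  define ths where "ths t = (SUP n. th n t)" for t
  have conv: "(\<lambda>n. th n t) \<longlonglongrightarrow> ths t" for t
    unfolding ths_def
  proof (rule LIMSEQ_incseq_SUP)
    show "bdd_above (range (\<lambda>n. th n t))" using thb by (auto intro: bdd_aboveI[of _ "pi/2"])
    show "incseq (\<lambda>n. th n t)" by (rule incseq_SucI) (rule incr)
  qed
  have thsb: "c1 / M \<le> ths t \<and> ths t \<le> c2 / M" for t
  proof
    show "c1 / M \<le> ths t"
      by (rule LIMSEQ_le_const[OF conv]) (use thb1 in \<open>metis Suc_le_D\<close>)
    show "ths t \<le> c2 / M"
      by (rule LIMSEQ_le_const2[OF conv]) (use thb1 in \<open>metis Suc_le_D\<close>)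
  qed
  have ths_per: "ths (t + T) = ths t" for t
    using good unfolding ths_def Good_def by simp
  have ths_lip: "\<bar>ths t - ths s\<bar> \<le> K * \<bar>t - s\<bar>" for t s
  proof -
    have "(\<lambda>n. \<bar>th n t - th n s\<bar>) \<longlonglongrightarrow> \<bar>ths t - ths s\<bar>"
      by (intro tendsto_intros conv)
    then show ?thesis by (rule LIMSEQ_le_const2) (use lip in auto)
  qed
  have ths_cont: "continuous_on UNIV ths"
  proof (rule lipschitz_on_continuous_on)
    show "K-lipschitz_on UNIV ths"
      by (rule lipschitz_onI) (use ths_lip Kpos in \<open>auto simp: dist_real_def\<close>)
  qed
  have thsb2: "- (pi/2) < ths t \<and> ths t < pi/2" for t
    using thsb[of t] c1M c2M aMpos by linarith
  have ths_good: "Good ths"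
    unfolding Good_def using ths_cont ths_per thsb2 by (simp add: less_imp_le)
  define W where "W = \<bar>c1\<bar> + \<bar>c2\<bar>"
  have wfW: "\<bar>wf \<theta> s\<bar> \<le> W" if "Good \<theta>" for \<theta> s
    using wf_bounds[OF that, of s] by (auto simp: W_def)
  have wf_conv: "(\<lambda>n. wf (th n) s) \<longlonglongrightarrow> wf ths s" for s
    unfolding wf_def h_def by (intro tendsto_intros conv)
  have cw: "\<And>n. continuous_on UNIV (wf (th n))" using wf_cont good by (auto simp: Good_def)
  have cws: "continuous_on UNIV (wf ths)" using wf_cont ths_cont by auto
  have A_conv: "(\<lambda>n. Aop m T (wf (th n)) t) \<longlonglongrightarrow> Aop m T (wf ths) t" for t
  proof -
    have "(\<lambda>n. integral {t - T..t} (\<lambda>s. exp (m * s) * wf (th n) s)) \<longlonglongrightarrow> integral {t - T..t} (\<lambda>s. exp (m * s) * wf ths s)"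
    proof (rule Equivalence_Lebesgue_Henstock_Integration.dominated_convergence(2))
      show "(\<lambda>s. exp (m * s) * wf (th k) s) integrable_on {t - T..t}" for k by (rule cont_integrable[OF cw])
      show "(\<lambda>s. exp (m * s) * W) integrable_on {t - T..t}" by (rule cont_integrable[OF continuous_on_const])
      show "norm (exp (m * s) * wf (th k) s) \<le> exp (m * s) * W" if "s \<in> {t - T..t}" for k s
        using wfW[OF good, of k s] by (simp add: abs_mult)
      show "(\<lambda>k. exp (m * s) * wf (th k) s) \<longlonglongrightarrow> exp (m * s) * wf ths s" if "s \<in> {t - T..t}" for s
        by (intro tendsto_intros wf_conv)
    qed
    then show ?thesis unfolding Aop_integral[OF cw Tpos] Aop_integral[OF cws Tpos]
      using c_pos[OF mpos Tpos] by (auto intro!: tendsto_intros)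
  qed
  have B_conv: "(\<lambda>n. Bop m T (wf (th n)) t) \<longlonglongrightarrow> Bop m T (wf ths) t" for t
  proof -
    have "(\<lambda>n. integral {t..t + T} (\<lambda>s. exp (- m * s) * wf (th n) s)) \<longlonglongrightarrow> integral {t..t + T} (\<lambda>s. exp (- m * s) * wf ths s)"
    proof (rule Equivalence_Lebesgue_Henstock_Integration.dominated_convergence(2))
      show "(\<lambda>s. exp (- m * s) * wf (th k) s) integrable_on {t..t + T}" for k by (rule cont_integrable[OF cw])
      show "(\<lambda>s. exp (- m * s) * W) integrable_on {t..t + T}" by (rule cont_integrable[OF continuous_on_const])
      show "norm (exp (- m * s) * wf (th k) s) \<le> exp (- m * s) * W" if "s \<in> {t..t + T}" for k s
        using wfW[OF good, of k s] by (simp add: abs_mult)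
      show "(\<lambda>k. exp (- m * s) * wf (th k) s) \<longlonglongrightarrow> exp (- m * s) * wf ths s" if "s \<in> {t..t + T}" for s
        by (intro tendsto_intros wf_conv)
    qed
    then show ?thesis unfolding Bop_integral[OF cw Tpos] Bop_integral[OF cws Tpos]
      using c_pos[OF mpos Tpos] by (auto intro!: tendsto_intros)
  qed
  have fixp: "Op ths t = ths t" for t
  proof -
    have "(\<lambda>n. Op (th n) t) \<longlonglongrightarrow> Op ths t" unfolding Op_def using mpos by (intro tendsto_intros A_conv B_conv) auto
    moreover have "(\<lambda>n. Op (th n) t) \<longlonglongrightarrow> ths t" using LIMSEQ_Suc[OF conv[of t]] by (simp add: thS)
    ultimately show ?thesis by (rule LIMSEQ_unique)
  qed
  have Opths: "Op ths = ths" using fixp by auto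
  define th1 where "th1 = Op' ths"
  have dth: "(ths has_real_derivative th1 t) (at t)" for t
    using Op_deriv[OF ths_good, of t] by (simp add: Opths th1_def)
  have dth1: "(th1 has_real_derivative h t (ths t)) (at t)" for t
    using Op'_deriv[OF ths_good, of t] by (simp add: Opths th1_def wf_def)
  have cth1: "continuous_on UNIV th1"
    by (rule continuous_at_imp_continuous_on) (meson DERIV_continuous dth1)
  define x where "x t = l * sin (ths t)" for t
  define x' where "x' t = l * (cos (ths t) * th1 t)" for t
  define x'' where "x'' t = l * (cos (ths t) * h t (ths t) - sin (ths t) * (th1 t * th1 t))" for t
  have dx: "(x has_real_derivative x' t) (at t)" for t
    unfolding x_def[abs_def] x'_def by (auto intro!: derivative_eq_intros dth)
  have dx': "(x' has_real_derivative x'' t) (at t)" for t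
    unfolding x'_def[abs_def] x''_def by (auto intro!: derivative_eq_intros dth dth1 simp: algebra_simps)
  have cx'': "continuous_on UNIV x''"
    unfolding x''_def[abs_def] h_def using lpos by (intro continuous_intros ths_cont cth1 cf'') auto
  have C2: "C2_with x x' x''" unfolding C2_with_def using dx dx' cx'' by blast
  have per: "periodic_with T x" unfolding periodic_with_def x_def using ths_per by simp
  have cpos: "cos (ths t) > 0" for t using thsb2[of t] by (intro cos_gt_zero_pi) auto
  have sc: "(sin (ths t))\<^sup>2 = 1 - (cos (ths t))\<^sup>2" for t by (simp add: sin_squared_eq)
  have bnd: "\<bar>x t\<bar> < l" for t
  proof -
    have "(sin (ths t))\<^sup>2 < 1" using sc[of t] cpos[of t] by simp
    then have "\<bar>sin (ths t)\<bar> < 1" by (simp add: abs_square_less_1)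
    then show ?thesis unfolding x_def using lpos by (simp add: abs_mult)
  qed
  have eqn: "x'' t = (g / l\<^sup>2 * sqrt (l\<^sup>2 - (x t)\<^sup>2) - (x' t)\<^sup>2 / (l\<^sup>2 - (x t)\<^sup>2)) * x t
                      - (l\<^sup>2 - (x t)\<^sup>2) / l\<^sup>2 * f'' t" for t
  proof -
    define C where "C = cos (ths t)"
    define S where "S = sin (ths t)"
    have C: "C > 0" using cpos by (simp add: C_def)
    have e1: "l\<^sup>2 - (x t)\<^sup>2 = (l * C)\<^sup>2"
    proof -
      have "S\<^sup>2 + C\<^sup>2 = 1" by (simp add: S_def C_def)
      then have "C\<^sup>2 = 1 - S\<^sup>2" by simp
      then show ?thesis by (simp add: x_def S_def[symmetric] power_mult_distrib right_diff_distrib)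
    qed
    have e2: "sqrt (l\<^sup>2 - (x t)\<^sup>2) = l * C" unfolding e1 using C lpos by simp
    have "x'' t = l * (C * (a * S - f'' t / l * C) - S * (th1 t * th1 t))"
      by (simp add: x''_def h_def C_def S_def)
    also have "\<dots> = (g / l\<^sup>2 * (l * C) - (l * (C * th1 t))\<^sup>2 / (l * C)\<^sup>2) * (l * S) - (l * C)\<^sup>2 / l\<^sup>2 * f'' t"
      using C lpos by (simp add: a_def field_simps power2_eq_square)
    moreover have "\<bar>l * cos (ths t)\<bar> = l * cos (ths t)" using C lpos by (simp add: C_def)
    ultimately show ?thesis unfolding e2 e1 by (simp add: x_def x'_def C_def S_def)
  qed
  show ?thesis using C2 per bnd eqn by blast
qed
end
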